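(* Let $C_g$ and $C_h$ be two monotone curves in $[0,N-k]\times[0,k]$ such that $\lfloor g(j)\rfloor=\lfloor h(j)\rfloor$ for every $j=1,\dots,N-k-1$. Then the links $L_g$ and $L_h$ are isotopic.
   Context: Fix $1\le k<N$. A monotone curve $C_g$ is the graph of a strictly increasing function $g:[0,N-k]\to[0,k]$ with $g(0)=0$, $g(N-k)=k$, and $g(j)\notin\mathbb Z$ for $j=1,\dots,N-k-1$. The link $L_g$ is defined as follows. Map each point $p=(x,g(x))$ of $C_g$ to $(\bar p,\,1-\frac x{N-k})\in T\times[0,1]$, where $\bar p$ is the image of $p$ in the torus $T=\mathbb R^2/\mathbb Z^2$. Then join $((0,0),1)$ to $((0,0),0)$ by a vertical segment. Equivalently, the diagram of $L_g$ on $T$ is the projection of $C_g$. Wherever two points $(x,g(x))$ and $(x',g(x'))$ with $x<x'$ project to the same point, the strand through $(x,g(x))$ is drawn above. $L_g$ is viewed as a link in the thickened torus $T\times[0,1]$, and isotopy is taken there. *)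

theory Defs
  imports "HOL-Analysis.Analysis"
begin

text \<open>The torus T = R^2/Z^2 is modelled as S^1 x S^1 (unit circles in the complex plane)
  via (x,y) |-> (e^{2 pi i x}, e^{2 pi i y}); the thickened torus is T x [0,1].\<close>

definition circ :: "real \<Rightarrow> complex" where
  "circ x = cis (2 * pi * x)"

definition thickened_torus :: "(complex \<times> complex \<times> real) set" where
  "thickened_torus = sphere 0 1 \<times> sphere 0 1 \<times> {0..1}"

definition monotone_curve :: "nat \<Rightarrow> nat \<Rightarrow> (real \<Rightarrow> real) \<Rightarrow> bool" where
  "monotone_curve N k g \<longleftrightarrow>
     continuous_on {0..real (N - k)} g \<and>
     strict_mono_on {0..real (N - k)} g \<and>
     g ` {0..real (N - k)} \<subseteq> {0..real k} \<and>
     g 0 = 0 \<and> g (real (N - k)) = real k \<and>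
     (\<forall>j\<in>{1..<N - k}. g (real j) \<notin> \<int>)"

definition link_L :: "nat \<Rightarrow> nat \<Rightarrow> (real \<Rightarrow> real) \<Rightarrow> (complex \<times> complex \<times> real) set" where
  "link_L N k g =
     (\<lambda>x. (circ x, circ (g x), 1 - x / real (N - k))) ` {0..real (N - k)}
     \<union> (\<lambda>t. (1, 1, t)) ` {0..1}"

definition ambient_isotopic :: "('a::topological_space) set \<Rightarrow> 'a set \<Rightarrow> 'a set \<Rightarrow> bool" where
  "ambient_isotopic M A B \<longleftrightarrow>
     (\<exists>H :: real \<times> 'a \<Rightarrow> 'a.
        continuous_on ({0..1} \<times> M) H \<and> H ` ({0..1} \<times> M) \<subseteq> M \<and>
        (\<forall>t\<in>{0..1}. \<exists>H'. homeomorphism M M (\<lambda>p. H (t, p)) H') \<and>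
        (\<forall>p\<in>M. H (0, p) = p) \<and>
        (\<lambda>p. H (1, p)) ` A = B)"

end

theory Submission
  imports Defs
begin

definition Pm :: "real \<Rightarrow> complex \<Rightarrow> complex" where
  "Pm t v = (2 * \<i> * v + of_real t * (1 - v)) / (2 * \<i> + of_real t * (1 - v))"

lemma Pm_den_nz:
  assumes "cmod v = 1" shows "2 * \<i> + of_real t * (1 - v) \<noteq> 0"
proof
  assume h: "2 * \<i> + of_real t * (1 - v) = 0"
  have r: "t * (1 - Re v) = 0" and i: "2 - t * Im v = 0"
    using arg_cong[OF h, of Re] arg_cong[OF h, of Im] by auto
  have e: "(Re v)^2 + (Im v)^2 = 1" using assms by (simp add: cmod_def)
  show False
  proof (cases "t = 0")
    case True then show ?thesis using i by simp
  next
    case False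
    then have "Re v = 1" using r by simp
    then have "Im v = 0" using e by simp
    then show ?thesis using i by simp
  qed
qed

lemma Pm_norm:
  assumes "cmod v = 1" shows "cmod (Pm t v) = 1"
proof -
  have e: "(Re v)^2 + (Im v)^2 = 1" using assms by (simp add: cmod_def)
  have "cmod (2 * \<i> * v + of_real t * (1 - v)) = cmod (2 * \<i> + of_real t * (1 - v))"
  proof -
    have "(cmod (2 * \<i> * v + of_real t * (1 - v)))^2 = (cmod (2 * \<i> + of_real t * (1 - v)))^2"
      unfolding cmod_power2 using e by (simp add: power2_eq_square algebra_simps)
    then show ?thesis by (simp add: power2_eq_iff_nonneg)
  qed
  then show ?thesis using Pm_den_nz[OF assms, of t] by (simp add: Pm_def norm_divide)
qed

lemma Pm_inv:
  assumes "cmod v = 1" shows "Pm (-t) (Pm t v) = v"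
proof -
  define d where "d = 2 * \<i> + of_real t * (1 - v)"
  define n where "n = 2 * \<i> * v + of_real t * (1 - v)"
  have d: "d \<noteq> 0" using Pm_den_nz[OF assms] d_def by auto
  have p: "Pm t v = n / d" by (simp add: Pm_def d_def n_def)
  have dn: "d - n = 2 * \<i> * (1 - v)" by (simp add: n_def d_def algebra_simps)
  have nn: "n - of_real t * (1 - v) = 2 * \<i> * v" by (simp add: n_def)
  have dd: "d - of_real t * (1 - v) = 2 * \<i>" by (simp add: d_def)
  have om: "1 - n/d = 2 * \<i> * (1 - v) / d" using d dn by (simp add: field_simps)
  have 1: "2 * \<i> * (n/d) + of_real (-t) * (1 - n/d) = - (4 * v) / d"
  proof -
    have "2 * \<i> * (n/d) + of_real (-t) * (1 - n/d) = 2 * \<i> * (n - of_real t * (1 - v)) / d"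
      unfolding om using d by (simp add: field_simps)
    then show ?thesis unfolding nn by simp
  qed
  have 2: "2 * \<i> + of_real (-t) * (1 - n/d) = - 4 / d"
  proof -
    have "2 * \<i> + of_real (-t) * (1 - n/d) = 2 * \<i> * (d - of_real t * (1 - v)) / d"
      unfolding om using d by (simp add: field_simps)
    then show ?thesis unfolding dd by simp
  qed
  show ?thesis unfolding p unfolding Pm_def 1 2 using d by (simp add: field_simps)
qed

lemma Pm_0[simp]: "Pm 0 v = v" by (simp add: Pm_def)
lemma Pm_1[simp]: "Pm t 1 = 1" by (simp add: Pm_def)

lemma Pm_eq1:
  assumes "cmod v = 1" shows "Pm t v = 1 \<longleftrightarrow> v = 1"
  using Pm_den_nz[OF assms, of t] by (auto simp: Pm_def divide_eq_1_iff)

definition Cc :: "complex \<Rightarrow> complex" where "Cc v = \<i> * (1 + v) / (1 - v)"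

lemma Cc_real:
  assumes "cmod v = 1" "v \<noteq> 1" shows "of_real (Re (Cc v)) = Cc v"
proof -
  have vc: "v * cnj v = 1" using assms(1) by (metis complex_norm_square mult.commute of_real_1 power_one)
  have v0: "v \<noteq> 0" using vc by auto
  have c1: "cnj v \<noteq> 1" using assms(2) by (metis complex_cnj_cnj complex_cnj_one)
  have "cnj (Cc v) = - \<i> * (1 + cnj v) / (1 - cnj v)" by (simp add: Cc_def)
  also have "\<dots> = Cc v"
  proof -
    have cv: "cnj v = 1 / v" using vc v0 by (simp add: field_simps)
    show ?thesis unfolding cv Cc_def using v0 assms(2) c1
      by (simp add: field_simps)
  qed
  finally have "cnj (Cc v) = Cc v" .
  then have "Im (Cc v) = 0" by (metis cnj.sel(2) neg_equal_zero)
  then show ?thesis by (simp add: complex_eq_iff)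
qed

lemma Pm_Cc:
  assumes "cmod v = 1" "v \<noteq> 1"
  shows "Pm t v = (\<i> * (Cc v + of_real t) + 1) / (\<i> * (Cc v + of_real t) - 1)"
proof -
  have v1: "1 - v \<noteq> 0" using assms by simp
  have d: "2 * \<i> + of_real t * (1 - v) \<noteq> 0" by (rule Pm_den_nz[OF assms(1)])
  have d2: "\<i> * (Cc v + of_real t) - 1 \<noteq> 0"
  proof
    assume "\<i> * (Cc v + of_real t) - 1 = 0"
    then have "\<i> * (of_real (Re (Cc v)) + of_real t) - 1 = 0" using Cc_real[OF assms] by simp
    then have "Re (\<i> * (of_real (Re (Cc v)) + of_real t) - 1) = 0" by simp
    then show False by simp
  qed
  have e: "\<i> * (Cc v + of_real t) = (- (1 + v) + \<i> * of_real t * (1 - v)) / (1 - v)"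
    unfolding Cc_def using v1 by (simp add: field_simps)
  define q where "q = - (1 + v) + \<i> * of_real t * (1 - v)"
  have "(\<i> * (Cc v + of_real t) + 1) / (\<i> * (Cc v + of_real t) - 1) = (q + (1 - v)) / (q - (1 - v))"
    unfolding e q_def[symmetric] using v1 by (simp add: divide_simps)
  also have "\<dots> = (- 2 * v + \<i> * of_real t * (1 - v)) / (- 2 + \<i> * of_real t * (1 - v))"
    unfolding q_def by (simp add: algebra_simps)
  also have "\<dots> = (-\<i> * (- 2 * v + \<i> * of_real t * (1 - v))) / (-\<i> * (- 2 + \<i> * of_real t * (1 - v)))"
    by (rule mult_divide_mult_cancel_left[symmetric]) simp
  also have "\<dots> = Pm t v" unfolding Pm_def by (simp add: algebra_simps)
  finally show ?thesis by simp
qed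

lemma Cc_inv:
  assumes "cmod v = 1" "v \<noteq> 1"
  shows "(\<i> * Cc v + 1) / (\<i> * Cc v - 1) = v"
proof -
  have v1: "1 - v \<noteq> 0" using assms by simp
  have e: "\<i> * Cc v = - (1 + v) / (1 - v)" unfolding Cc_def using v1 by (simp add: field_simps)
  show ?thesis unfolding e using v1 by (simp add: field_simps)
qed

lemma Pm_exists:
  assumes "cmod a = 1" "a \<noteq> 1" "cmod b = 1" "b \<noteq> 1"
  shows "\<exists>t. Pm t a = b"
proof
  let ?t = "Re (Cc b) - Re (Cc a)"
  have "Cc a + of_real ?t = Cc b" using Cc_real[OF assms(1,2)] Cc_real[OF assms(3,4)]
    by (metis add_diff_cancel_left' add_diff_eq of_real_diff)
  then show "Pm ?t a = b" using Pm_Cc[OF assms(1,2)] Cc_inv[OF assms(3,4)] by simp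
qed

lemma circ_norm[simp]: "cmod (circ x) = 1" by (simp add: circ_def)
lemma circ_add: "circ (a + b) = circ a * circ b" by (simp add: circ_def cis_mult distrib_left)
lemma circ_int: "x \<in> \<int> \<Longrightarrow> circ x = 1"
  unfolding circ_def by (metis cis_multiple_2pi)
lemma circ_eq_1: assumes "circ x = 1" shows "x \<in> \<int>"
proof -
  have "cos (2 * pi * x) = 1" using arg_cong[OF assms, of Re] by (simp add: circ_def)
  then obtain n :: int where "2 * pi * x = real_of_int n * 2 * pi" using cos_one_2pi_int by metis
  then have "x = n" by simp
  then show ?thesis by simp
qed
lemma circ_0[simp]: "circ 0 = 1" by (simp add: circ_def)
lemma circ_eq: assumes "circ a = circ b" shows "a - b \<in> \<int>"
proof -
  have "circ (a - b) * circ b = circ b * 1" using assms circ_add[of "a - b" b] by simp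
  moreover have "circ b \<noteq> 0" using circ_norm[of b] by (metis norm_zero zero_neq_one)
  ultimately have "circ (a - b) = 1" by simp
  then show ?thesis by (rule circ_eq_1)
qed
lemma continuous_on_circ[continuous_intros]:
  "continuous_on S f \<Longrightarrow> continuous_on S (\<lambda>x. circ (f x))"
  unfolding circ_def by (intro continuous_intros)

lemma Pm_continuous[continuous_intros]:
  assumes "continuous_on S f" "continuous_on S g" "\<And>x. x \<in> S \<Longrightarrow> cmod (g x) = 1"
  shows "continuous_on S (\<lambda>x. Pm (f x) (g x))"
  unfolding Pm_def using assms Pm_den_nz by (intro continuous_intros) auto

lemma ints_const:
  fixes f :: "'a::topological_space \<Rightarrow> real"
  assumes "connected S" "continuous_on S f" "\<And>x. x \<in> S \<Longrightarrow> f x \<in> \<int>" "a \<in> S" "b \<in> S"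
  shows "f a = f b"
proof -
  have "f constant_on S"
  proof (rule continuous_discrete_range_constant[OF assms(1,2)])
    fix x assume x: "x \<in> S"
    show "\<exists>e>0. \<forall>y. y \<in> S \<and> f y \<noteq> f x \<longrightarrow> e \<le> norm (f y - f x)"
    proof (intro exI[of _ 1] conjI allI impI)
      fix y assume "y \<in> S \<and> f y \<noteq> f x"
      then have "f y - f x \<in> \<int>" "f y - f x \<noteq> 0" using assms(3) x by auto
      then show "1 \<le> norm (f y - f x)"
        by (metis Ints_cases Ints_nonzero_abs_ge1 real_norm_def)
    qed simp
  qed
  then show ?thesis using assms(4,5) by (auto simp: constant_on_def)
qed

lemma floor_const:
  fixes f :: "real \<Rightarrow> real"
  assumes "continuous_on {0..1} f" "\<And>s. s \<in> {0..1} \<Longrightarrow> f s \<notin> \<int>"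
  shows "\<lfloor>f 1\<rfloor> = \<lfloor>f 0\<rfloor>"
proof (rule ccontr)
  assume ne: "\<lfloor>f 1\<rfloor> \<noteq> \<lfloor>f 0\<rfloor>"
  show False
  proof (cases "\<lfloor>f 1\<rfloor> > \<lfloor>f 0\<rfloor>")
    case True
    let ?m = "real_of_int \<lfloor>f 1\<rfloor>"
    have "f 0 \<le> ?m" using True by (metis floor_less_iff less_eq_real_def not_less of_int_floor_le order_trans) 
    moreover have "?m \<le> f 1" by simp
    ultimately obtain s where "0 \<le> s" "s \<le> 1" "f s = ?m" using IVT'[OF _ _ _ assms(1)] by force
    then show False using assms(2)[of s] by auto
  next
    case False
    then have lt: "\<lfloor>f 1\<rfloor> < \<lfloor>f 0\<rfloor>" using ne by simp
    let ?m = "real_of_int \<lfloor>f 0\<rfloor>"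
    have "f 1 \<le> ?m" using lt by (metis floor_less_iff less_eq_real_def not_less of_int_floor_le order_trans)
    moreover have "?m \<le> f 0" by simp
    ultimately obtain s where "0 \<le> s" "s \<le> 1" "f s = ?m" using IVT2'[OF _ _ _ assms(1)] by force
    then show False using assms(2)[of s] by auto
  qed
qed

lemma lift_lemma:
  fixes L :: real and g tau :: "real \<Rightarrow> real"
  assumes L: "0 \<le> L" and cg: "continuous_on {0..L} g" and ct: "continuous_on {0..L} tau"
  obtains G where "continuous_on {0..L} G"
    "\<And>x. x \<in> {0..L} \<Longrightarrow> circ (G x) = Pm (tau x) (circ (g x))"
    "\<And>x. x \<in> {0..L} \<Longrightarrow> g x \<in> \<int> \<Longrightarrow> G x = g x"
    "\<And>x. x \<in> {0..L} \<Longrightarrow> g x \<notin> \<int> \<Longrightarrow> \<lfloor>G x\<rfloor> = \<lfloor>g x\<rfloor>"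
proof -
  define S :: "(real \<times> real) set" where "S = {0..1} \<times> {0..L}"
  define f where "f = (\<lambda>p::real\<times>real. Pm (fst p * tau (snd p)) (circ (g (snd p))))"
  have cS: "convex S" unfolding S_def by (simp add: convex_Times)
  have ctS: "continuous_on S (\<lambda>p. tau (snd p))"
    by (rule continuous_on_compose2[OF ct continuous_on_snd]) (auto simp: S_def)
  have cgS: "continuous_on S (\<lambda>p. g (snd p))"
    by (rule continuous_on_compose2[OF cg continuous_on_snd]) (auto simp: S_def)
  have cf: "continuous_on S f" unfolding f_def
    by (intro continuous_intros ctS cgS) auto
  have f1: "cmod (f p) = 1" for p unfolding f_def by (simp add: Pm_norm)
  have fnz: "f p \<noteq> 0" for p using f1[of p] by auto
  obtain l where cl: "continuous_on S l" and fl: "\<And>p. p \<in> S \<Longrightarrow> f p = exp (l p)"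
    using continuous_logarithm_on_contractible[OF cf convex_imp_contractible[OF cS]] fnz by blast
  define Lam where "Lam = (\<lambda>p. Im (l p) / (2 * pi))"
  have cLam: "continuous_on S Lam" unfolding Lam_def by (intro continuous_intros cl) auto
  have circLam: "circ (Lam p) = f p" if "p \<in> S" for p
  proof -
    have "cmod (exp (l p)) = 1" using f1[of p] fl[OF that] by simp
    then have "exp (Re (l p)) = 1" by simp
    then have "exp (l p) = cis (Im (l p))" by (simp add: exp_eq_polar)
    then show ?thesis unfolding Lam_def circ_def using fl[OF that] by simp
  qed
  define D where "D = (\<lambda>x. Lam (0, x) - g x)"
  have cD: "continuous_on {0..L} D" unfolding D_def
    by (intro continuous_intros cg continuous_on_compose2[OF cLam]) (auto simp: S_def)
  have DZ: "D x \<in> \<int>" if "x \<in> {0..L}" for x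
  proof -
    have "circ (Lam (0, x)) = circ (g x)" using circLam[of "(0,x)"] that by (simp add: S_def f_def)
    then show ?thesis unfolding D_def by (rule circ_eq)
  qed
  have Dc: "D x = D 0" if "x \<in> {0..L}" for x
    using ints_const[OF connected_Icc cD DZ that] L by simp
  define G where "G = (\<lambda>x. Lam (1, x) - D 0)"
  define F where "F = (\<lambda>x s. Lam (s, x) - D 0)"
  have cF: "continuous_on {0..1} (F x)" if "x \<in> {0..L}" for x unfolding F_def
    by (intro continuous_intros continuous_on_compose2[OF cLam]) (use that in \<open>auto simp: S_def\<close>)
  have F0: "F x 0 = g x" if "x \<in> {0..L}" for x using Dc[OF that] by (simp add: F_def D_def)
  have circF: "circ (F x s) = f (s, x)" if "x \<in> {0..L}" "s \<in> {0..1}" for x s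
  proof -
    have "circ (F x s) * circ (D 0) = circ (Lam (s, x))" unfolding F_def by (simp flip: circ_add)
    moreover have "circ (D 0) = 1" by (rule circ_int) (rule DZ, use L in auto)
    ultimately show ?thesis using circLam[of "(s,x)"] that by (simp add: S_def)
  qed
  show ?thesis
  proof
    show "continuous_on {0..L} G" unfolding G_def
      by (intro continuous_intros continuous_on_compose2[OF cLam]) (auto simp: S_def)
    fix x assume x: "x \<in> {0..L}"
    have GF: "G x = F x 1" by (simp add: G_def F_def)
    show "circ (G x) = Pm (tau x) (circ (g x))" using circF[OF x, of 1] by (simp add: GF f_def)
    { assume gz: "g x \<in> \<int>"
      have FZ: "F x s \<in> \<int>" if "s \<in> {0..1}" for s
      proof -
        have "circ (F x s) = 1" using circF[OF x that] circ_int[OF gz] by (simp add: f_def)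
        then show ?thesis by (rule circ_eq_1)
      qed
      have "F x 1 = F x 0" by (rule ints_const[OF connected_Icc cF[OF x] FZ]) auto
      then show "G x = g x" using F0[OF x] GF by simp }
    { assume gz: "g x \<notin> \<int>"
      have FZ: "F x s \<notin> \<int>" if "s \<in> {0..1}" for s
      proof
        assume "F x s \<in> \<int>"
        then have "circ (F x s) = 1" by (rule circ_int)
        then have "Pm (s * tau x) (circ (g x)) = 1" using circF[OF x that] by (simp add: f_def)
        then have "circ (g x) = 1" by (simp add: Pm_eq1)
        then show False using gz circ_eq_1 by blast
      qed
      have "\<lfloor>F x 1\<rfloor> = \<lfloor>F x 0\<rfloor>" by (rule floor_const[OF cF[OF x] FZ])
      then show "\<lfloor>G x\<rfloor> = \<lfloor>g x\<rfloor>" using F0[OF x] GF by simp }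
  qed
qed

definition beta :: "complex \<Rightarrow> real \<Rightarrow> real" where
  "beta u x = max 0 (1 - cmod (u - circ x) / cmod (1 - circ x))"

lemma beta_bounds: "0 \<le> beta u x" "beta u x \<le> 1"
  unfolding beta_def by (auto simp: divide_nonneg_nonneg)

lemma beta_self[simp]: "beta (circ x) x = 1" by (simp add: beta_def)
lemma beta_one: "circ x \<noteq> 1 \<Longrightarrow> beta 1 x = 0" by (simp add: beta_def)

lemma rb_cont:
  fixes r :: "real \<Rightarrow> real"
  assumes cr: "continuous_on {0..L} r" and r0: "\<And>x. x \<in> {0..L} \<Longrightarrow> circ x = 1 \<Longrightarrow> r x = 0"
  shows "continuous_on (UNIV \<times> {0..L}) (\<lambda>p. r (snd p) * beta (fst p) (snd p))"
proof -
  let ?S = "UNIV \<times> {0..L} :: (complex \<times> real) set"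
  have crs: "continuous_on ?S (\<lambda>p. r (snd p))"
    by (rule continuous_on_compose2[OF cr continuous_on_snd]) auto
  show ?thesis unfolding continuous_on_eq_continuous_within
  proof
    fix p assume p: "p \<in> ?S"
    have rt: "((\<lambda>p. r (snd p)) \<longlongrightarrow> r (snd p)) (at p within ?S)"
      using crs p unfolding continuous_on_eq_continuous_within continuous_within by blast
    show "continuous (at p within ?S) (\<lambda>p. r (snd p) * beta (fst p) (snd p))"
    proof (cases "circ (snd p) = 1")
      case True
      then have rp: "r (snd p) = 0" using r0 p by auto
      have "((\<lambda>p. r (snd p) * beta (fst p) (snd p)) \<longlongrightarrow> 0) (at p within ?S)"
      proof (rule Lim_null_comparison)
        show "\<forall>\<^sub>F q in at p within ?S. norm (r (snd q) * beta (fst q) (snd q)) \<le> \<bar>r (snd q)\<bar>"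
          using beta_bounds by (auto intro!: always_eventually simp: abs_mult mult_left_le)
        show "((\<lambda>q. \<bar>r (snd q)\<bar>) \<longlongrightarrow> 0) (at p within ?S)"
          using tendsto_rabs_zero[OF rt[unfolded rp]] .
      qed
      then show ?thesis unfolding continuous_within using rp by simp
    next
      case False
      then have nz: "cmod (1 - circ (snd p)) \<noteq> 0" by simp
      have "((\<lambda>q. r (snd q) * beta (fst q) (snd q)) \<longlongrightarrow> r (snd p) * beta (fst p) (snd p)) (at p within ?S)"
      proof -
        have cc: "continuous_on UNIV (\<lambda>q::complex\<times>real. circ (snd q))" by (intro continuous_intros)
        have ct: "((\<lambda>q. circ (snd q)) \<longlongrightarrow> circ (snd p)) (at p within ?S)"
          using cc by (metis UNIV_I continuous_on_def tendsto_within_subset subset_UNIV)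
        show ?thesis unfolding beta_def
          by (intro tendsto_intros rt ct nz)
      qed
      then show ?thesis unfolding continuous_within .
    qed
  qed
qed

definition hat :: "real \<Rightarrow> real" where "hat y = max 0 (1 - \<bar>y\<bar>)"

lemma hat_nat: "hat (real m - real j) = (if j = m then 1 else 0)"
proof (cases "j = m")
  case False
  then have "\<bar>real m - real j\<bar> \<ge> 1" by linarith
  then show ?thesis using False by (simp add: hat_def)
qed (simp add: hat_def)

lemma sum_hat:
  assumes "m \<le> n"
  shows "(\<Sum>j\<in>{0..n}. T j * hat (real m - real j)) = T m"
  using assms by (simp add: hat_nat if_distrib[of "\<lambda>x. T _ * x"] sum.delta cong: if_cong)

lemma circ_one_nat:
  assumes "x \<in> {0..real n}" "circ x = 1" shows "\<exists>j\<le>n. x = real j"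
proof -
  have "x \<in> \<int>" using circ_eq_1[OF assms(2)] .
  then obtain m :: int where m: "x = of_int m" by (auto elim: Ints_cases)
  then have "m \<ge> 0" using assms(1) by auto
  then have "x = real (nat m)" using m by simp
  moreover have "nat m \<le> n" using assms(1) \<open>x = real (nat m)\<close> by auto
  ultimately show ?thesis by blast
qed

lemma int_floor_eq:
  fixes a b :: real
  assumes "a - b \<in> \<int>" "\<lfloor>a\<rfloor> = \<lfloor>b\<rfloor>" shows "a = b"
proof -
  obtain m :: int where m: "a - b = of_int m" using assms(1) by (auto elim: Ints_cases)
  have "\<bar>a - b\<bar> < 1" using assms(2) by linarith
  then have "m = 0" using m by simp
  then show ?thesis using m by simp
qed

lemma cont_hatsum[continuous_intros]:
  "continuous_on S f \<Longrightarrow> continuous_on S (\<lambda>x. \<Sum>j\<in>A. c j * hat (f x - real j))"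
  unfolding hat_def by (intro continuous_intros)

lemma comp_R:
  assumes "continuous_on (UNIV \<times> {0..1}) (\<lambda>q. R (fst q) (snd q))"
    "continuous_on S u" "continuous_on S z" "\<And>x. x \<in> S \<Longrightarrow> z x \<in> {0..1}"
  shows "continuous_on S (\<lambda>x. R (u x) (z x))"
proof -
  have "continuous_on S (\<lambda>x. (\<lambda>q. R (fst q) (snd q)) (u x, z x))"
    by (rule continuous_on_compose2[OF assms(1)]) (use assms(2-4) in \<open>auto intro: continuous_intros\<close>)
  then show ?thesis by simp
qed

lemma mem_tt: "w \<in> thickened_torus \<longleftrightarrow> cmod (fst w) = 1 \<and> cmod (fst (snd w)) = 1 \<and> snd (snd w) \<in> {0..1}"
  by (cases w) (auto simp: thickened_torus_def)

theorem corollary4p1: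
  fixes N k :: nat and g h :: "real \<Rightarrow> real"
  assumes "1 \<le> k" and "k < N"
    and "monotone_curve N k g" and "monotone_curve N k h"
    and "\<forall>j\<in>{1..<N - k}. \<lfloor>g (real j)\<rfloor> = \<lfloor>h (real j)\<rfloor>"
  shows "ambient_isotopic thickened_torus (link_L N k g) (link_L N k h)"
proof -
  define n where "n = N - k"
  define L where "L = real n"
  have L0: "0 < L" using assms(2) by (simp add: L_def n_def)
  have cg: "continuous_on {0..L} g" and ch: "continuous_on {0..L} h"
    using assms(3,4) by (simp_all add: monotone_curve_def L_def n_def)
  have g0: "g 0 = 0" and gL: "g L = real k" and h0: "h 0 = 0" and hL: "h L = real k"
    using assms(3,4) by (simp_all add: monotone_curve_def L_def n_def)
  have gZ: "g (real j) \<notin> \<int>" and hZ: "h (real j) \<notin> \<int>" if "1 \<le> j" "j < n" for j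
    using assms(3,4) that by (auto simp: monotone_curve_def n_def)
  define T where "T = (\<lambda>j::nat. SOME t. Pm t (circ (g (real j))) = circ (h (real j)))"
  have T: "Pm (T j) (circ (g (real j))) = circ (h (real j))" if "1 \<le> j" "j < n" for j
  proof -
    have "\<exists>t. Pm t (circ (g (real j))) = circ (h (real j))"
      by (rule Pm_exists) (use gZ[OF that] hZ[OF that] circ_eq_1 in auto)
    then show ?thesis unfolding T_def by (rule someI_ex)
  qed
  define tau where "tau = (\<lambda>x. \<Sum>j\<in>{0..n}. T j * hat (x - real j))"
  have ctau: "continuous_on S tau" for S unfolding tau_def hat_def
    by (intro continuous_intros)
  have tauj: "tau (real j) = T j" if "j \<le> n" for j
    unfolding tau_def using sum_hat[OF that] .
  obtain G where cG: "continuous_on {0..L} G"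
    and Gc: "\<And>x. x \<in> {0..L} \<Longrightarrow> circ (G x) = Pm (tau x) (circ (g x))"
    and GZ: "\<And>x. x \<in> {0..L} \<Longrightarrow> g x \<in> \<int> \<Longrightarrow> G x = g x"
    and GF: "\<And>x. x \<in> {0..L} \<Longrightarrow> g x \<notin> \<int> \<Longrightarrow> \<lfloor>G x\<rfloor> = \<lfloor>g x\<rfloor>"
    using lift_lemma[OF less_imp_le[OF L0] cg ctau] by blast
  define r where "r = (\<lambda>x. h x - G x)"
  have cr: "continuous_on {0..L} r" unfolding r_def by (intro continuous_intros ch cG)
  have rc: "circ (r x) * Pm (tau x) (circ (g x)) = circ (h x)" if "x \<in> {0..L}" for x
    using Gc[OF that] circ_add[of "r x" "G x"] by (simp add: r_def)
  have rj: "r (real j) = 0" if jn: "j \<le> n" for j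
  proof -
    have jL: "real j \<in> {0..L}" using that by (simp add: L_def)
    consider "j = 0" | "j = n" | "1 \<le> j" "j < n" using jn by (cases "j = 0"; cases "j = n") auto
    then show ?thesis
    proof cases
      case 1 then show ?thesis using GZ[of 0] g0 h0 by (simp add: r_def L_def)
    next
      case 2 then show ?thesis using GZ[of L] gL hL L0 by (simp add: r_def L_def)
    next
      case 3
      have fl: "\<lfloor>G (real j)\<rfloor> = \<lfloor>h (real j)\<rfloor>"
        using GF[OF jL gZ[OF 3]] assms(5) 3 by (simp add: n_def)
      have "circ (G (real j)) = circ (h (real j))" using Gc[OF jL] T[OF 3] tauj that by simp
      then have "G (real j) - h (real j) \<in> \<int>" by (rule circ_eq)
      then have "G (real j) = h (real j)" using int_floor_eq fl by blast
      then show ?thesis by (simp add: r_def)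
    qed
  qed
  have r0: "r x = 0" if "x \<in> {0..L}" "circ x = 1" for x
    using circ_one_nat[of x n] that rj by (auto simp: L_def)
  define rho where "rho = (\<lambda>u z. r (L * (1 - z)) * beta u (L * (1 - z)))"
  have crho: "continuous_on (UNIV \<times> {0..1}) (\<lambda>q. rho (fst q) (snd q))"
  proof -
    have c1: "continuous_on (UNIV \<times> {0..1}) (\<lambda>q::complex\<times>real. (fst q, L * (1 - snd q)))"
      by (intro continuous_intros)
    have c2: "(\<lambda>q::complex\<times>real. (fst q, L * (1 - snd q))) ` (UNIV \<times> {0..1}) \<subseteq> UNIV \<times> {0..L}"
      using L0 by (auto simp: mult_le_cancel_left1)
    have "continuous_on (UNIV \<times> {0..1}) (\<lambda>q. (\<lambda>p. r (snd p) * beta (fst p) (snd p)) (fst q, L * (1 - snd q)))"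
      by (rule continuous_on_compose2[OF rb_cont[OF cr r0] c1 c2])
    then show ?thesis by (simp add: rho_def)
  qed
  have rho1: "rho 1 z = 0" if "z \<in> {0..1}" for z
  proof -
    have zL: "L * (1 - z) \<in> {0..L}" using that L0 by (auto simp: mult_le_cancel_left1)
    show ?thesis
      using r0[OF zL] beta_one[of "L * (1 - z)"] by (cases "circ (L * (1 - z)) = 1") (auto simp: rho_def)
  qed
  have rhox: "rho (circ x) (1 - x / L) = r x" for x
    using L0 by (simp add: rho_def)
  define Hf where "Hf = (\<lambda>t w. (fst w, Pm (t * tau (L * (1 - snd (snd w)))) (fst (snd w))
        * circ (t * rho (fst w) (snd (snd w))), snd (snd w)))"
  define Hi where "Hi = (\<lambda>t w. (fst w, Pm (- (t * tau (L * (1 - snd (snd w)))))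
        (fst (snd w) * circ (- (t * rho (fst w) (snd (snd w))))), snd (snd w)))"
  define H where "H = (\<lambda>p::real \<times> (complex \<times> complex \<times> real). Hf (fst p) (snd p))"
  let ?M = thickened_torus
  have cH: "continuous_on ({0..1} \<times> ?M) H"
  proof -
    have "continuous_on ({0..1} \<times> ?M) (\<lambda>p::real \<times> (complex \<times> complex \<times> real). rho (fst (snd p)) (snd (snd (snd p))))"
      by (rule comp_R[OF crho]) (auto intro!: continuous_intros simp: mem_tt)
    then show ?thesis unfolding H_def Hf_def tau_def
      by (intro continuous_intros ctau) (auto simp: mem_tt)
  qed
  have cHf: "continuous_on ?M (Hf t)" for t
  proof -
    have "continuous_on ?M (\<lambda>w. rho (fst w) (snd (snd w)))"
      by (rule comp_R[OF crho]) (auto intro!: continuous_intros simp: mem_tt)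
    then show ?thesis unfolding Hf_def tau_def
      by (intro continuous_intros ctau) (auto simp: mem_tt)
  qed
  have cHi: "continuous_on ?M (Hi t)" for t
  proof -
    have "continuous_on ?M (\<lambda>w. rho (fst w) (snd (snd w)))"
      by (rule comp_R[OF crho]) (auto intro!: continuous_intros simp: mem_tt)
    then show ?thesis unfolding Hi_def tau_def
      by (intro continuous_intros ctau) (auto simp: mem_tt norm_mult)
  qed
  have HfM: "Hf t w \<in> ?M" if "w \<in> ?M" for t w
    using that by (auto simp: mem_tt Hf_def norm_mult Pm_norm)
  have HiM: "Hi t w \<in> ?M" if "w \<in> ?M" for t w
    using that by (auto simp: mem_tt Hi_def norm_mult Pm_norm)
  have cc: "circ a * circ (- a) = 1" for a using circ_add[of a "-a"] by simp
  have HiHf: "Hi t (Hf t w) = w" if "w \<in> ?M" for t w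
  proof -
    have v: "cmod (fst (snd w)) = 1" using that by (simp add: mem_tt)
    show ?thesis unfolding Hi_def Hf_def using Pm_inv[OF v] cc by (simp add: mult.assoc)
  qed
  have HfHi: "Hf t (Hi t w) = w" if "w \<in> ?M" for t w
  proof -
    obtain u v z where w: "w = (u, v, z)" by (cases w) auto
    define a where "a = t * tau (L * (1 - z))"
    define b where "b = t * rho u z"
    have v: "cmod (v * circ (- b)) = 1"
      using that by (simp add: mem_tt norm_mult w)
    have 1: "Pm a (Pm (- a) (v * circ (- b))) = v * circ (- b)" using Pm_inv[OF v, of "- a"] by simp
    have 2: "v * circ (- b) * circ b = v" using cc[of b] by (simp add: mult.assoc mult.commute)
    have "Hf t (Hi t w) = (u, Pm a (Pm (- a) (v * circ (- b))) * circ b, z)"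
      unfolding Hf_def Hi_def w a_def b_def by simp
    also have "\<dots> = w" unfolding 1 2 w ..
    finally show ?thesis .
  qed
  show ?thesis unfolding ambient_isotopic_def
  proof (intro exI[of _ H] conjI ballI)
    show "continuous_on ({0..1} \<times> ?M) H" by (rule cH)
    show "H ` ({0..1} \<times> ?M) \<subseteq> ?M" using HfM by (auto simp: H_def)
    fix t :: real assume "t \<in> {0..1}"
    show "\<exists>H'. homeomorphism ?M ?M (\<lambda>p. H (t, p)) H'"
      by (rule exI[of _ "Hi t"], unfold H_def fst_conv snd_conv, rule homeomorphismI)
         (use cHf cHi HfM HiM HiHf HfHi in auto)
  next
    fix p assume "p \<in> ?M"
    show "H (0, p) = p" by (simp add: H_def Hf_def)
  next
    have V: "(\<lambda>p. H (1, p)) ` ((\<lambda>t. (1, 1, t)) ` {0..1}) = (\<lambda>t. (1::complex, 1::complex, t)) ` {0..1}"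
      unfolding image_image by (rule image_cong) (auto simp: H_def Hf_def rho1)
    have C: "(\<lambda>p. H (1, p)) ` ((\<lambda>x. (circ x, circ (g x), 1 - x / real (N - k))) ` {0..real (N - k)})
       = (\<lambda>x. (circ x, circ (h x), 1 - x / real (N - k))) ` {0..real (N - k)}"
      unfolding image_image
    proof (rule image_cong)
      fix x assume x: "x \<in> {0..real (N - k)}"
      then have xL: "x \<in> {0..L}" by (simp add: L_def n_def)
      have "L * (1 - (1 - x / L)) = x" using L0 by simp
      then show "H (1, circ x, circ (g x), 1 - x / real (N - k)) = (circ x, circ (h x), 1 - x / real (N - k))"
        using rc[OF xL] rhox[of x] by (simp add: H_def Hf_def L_def n_def mult.commute)
    qed simp
    show "(\<lambda>p. H (1, p)) ` link_L N k g = link_L N k h"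
      unfolding link_L_def image_Un V C ..
  qed
qed

end
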